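(* If $f:\mathbb{N}^d\to\mathbb{N}$ is obliviously-computable, then for every $i\in\{1,\ldots,d\}$ and $j\in\mathbb{N}$ the fixed-input restriction $f_{[\vec{x}(i)\to j]}:\mathbb{N}^d\to\mathbb{N}$ is obliviously-computable.
   Context: A chemical reaction network (CRN) is a pair $(\mathcal{S},\mathcal{R})$ of a finite set of species and a finite set of reactions $(\vec{R},\vec{P})\in\mathbb{N}^{\mathcal{S}}\times\mathbb{N}^{\mathcal{S}}$. A configuration is $\vec{C}\in\mathbb{N}^{\mathcal{S}}$; a reaction is applicable if $\vec{R}\le\vec{C}$ and yields $\vec{C}-\vec{R}+\vec{P}$; reachability is via finite sequences of applicable reactions. To compute $f:\mathbb{N}^d\to\mathbb{N}$ the CRN has input species $X_1,\ldots,X_d$, output species $Y$, leader species $L$; the initial configuration $\vec{I}_{\vec{x}}$ has $\vec{x}(i)$ copies of $X_i$, one $L$, nothing else. $\vec{C}$ is stable if all configurations reachable from it have the same count of $Y$. The CRN stably computes $f$ if for every $\vec{x}$ and every $\vec{C}$ reachable from $\vec{I}_{\vec{x}}$ some stable $\vec{O}$ reachable from $\vec{C}$ has $\vec{O}(Y)=f(\vec{x})$. The CRN is output-oblivious if $Y$ is never a reactant; $f$ is obliviously-computable if stably computed by an output-oblivious CRN. The fixed-input restriction is $f_{[\vec{x}(i)\to j]}(\vec{x})=f(\vec{x}(1),\ldots,\vec{x}(i-1),j,\vec{x}(i+1),\ldots,\vec{x}(d))$ for all $\vec{x}\in\mathbb{N}^d$. *)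

theory Defs
  imports Main
begin

(* Species are encoded as natural numbers; configurations are functions
   species => nat (vectors in N^S); a reaction is a pair (reactants, products). *)
type_synonym species = nat
type_synonym config = "species \<Rightarrow> nat"
type_synonym reaction = "config \<times> config"

record crn =
  species :: "species set"
  reactions :: "reaction set"
  inputs :: "species list"     (* X_1, ..., X_d  (list index i-1 for X_i) *)
  out_species :: species
  leader_sp :: species

definition well_formed :: "crn \<Rightarrow> nat \<Rightarrow> bool" where
  "well_formed C d \<longleftrightarrow>
     finite (species C) \<and> finite (reactions C) \<and>
     (\<forall>r\<in>reactions C. \<forall>s. s \<notin> species C \<longrightarrow> fst r s = 0 \<and> snd r s = 0) \<and>
     length (inputs C) = d \<and> distinct (inputs C) \<and> set (inputs C) \<subseteq> species C \<and>
     out_species C \<in> species C \<and> leader_sp C \<in> species C \<and>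
     leader_sp C \<notin> set (inputs C) \<and> out_species C \<notin> set (inputs C) \<and> out_species C \<noteq> leader_sp C"

definition step :: "crn \<Rightarrow> config \<Rightarrow> config \<Rightarrow> bool" where
  "step C A B \<longleftrightarrow> (\<exists>r\<in>reactions C. fst r \<le> A \<and> B = (\<lambda>s. A s - fst r s + snd r s))"

definition reaches :: "crn \<Rightarrow> config \<Rightarrow> config \<Rightarrow> bool" where
  "reaches C = (step C)\<^sup>*\<^sup>*"

definition init_config :: "crn \<Rightarrow> nat list \<Rightarrow> config" where
  "init_config C x = (\<lambda>s. (\<Sum>i<length x. if inputs C ! i = s then x ! i else 0)
                          + (if s = leader_sp C then 1 else 0))"

definition stable :: "crn \<Rightarrow> config \<Rightarrow> bool" where
  "stable C A \<longleftrightarrow> (\<forall>B. reaches C A B \<longrightarrow> B (out_species C) = A (out_species C))"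

(* f : N^d -> N is represented as a function on lists; only lists of length d matter *)
definition stably_computes :: "crn \<Rightarrow> nat \<Rightarrow> (nat list \<Rightarrow> nat) \<Rightarrow> bool" where
  "stably_computes C d f \<longleftrightarrow> well_formed C d \<and>
     (\<forall>x. length x = d \<longrightarrow>
        (\<forall>A. reaches C (init_config C x) A \<longrightarrow>
           (\<exists>Z. reaches C A Z \<and> stable C Z \<and> Z (out_species C) = f x)))"

definition output_oblivious :: "crn \<Rightarrow> bool" where
  "output_oblivious C \<longleftrightarrow> (\<forall>r\<in>reactions C. fst r (out_species C) = 0)"

definition obliviously_computable :: "nat \<Rightarrow> (nat list \<Rightarrow> nat) \<Rightarrow> bool" where
  "obliviously_computable d f \<longleftrightarrow> (\<exists>C. stably_computes C d f \<and> output_oblivious C)"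

definition fix_input :: "(nat list \<Rightarrow> nat) \<Rightarrow> nat \<Rightarrow> nat \<Rightarrow> nat list \<Rightarrow> nat" where
  "fix_input f i j x = f (x[i - 1 := j])"

end

theory Submission
  imports Defs
begin

lemma step_upd:
  assumes z: "\<forall>r\<in>reactions C. fst r s = 0 \<and> snd r s = 0"
    and st: "step C A B"
  shows "step C (A(s:=v)) (B(s:=v)) \<and> B s = A s"
proof -
  from st obtain r where r: "r \<in> reactions C" "fst r \<le> A"
    and B: "B = (\<lambda>t. A t - fst r t + snd r t)" unfolding step_def by blast
  have zs: "fst r s = 0" "snd r s = 0" using z r(1) by auto
  have "fst r \<le> A(s:=v)" using r(2) zs by (auto simp: le_fun_def)
  moreover have "B(s:=v) = (\<lambda>t. (A(s:=v)) t - fst r t + snd r t)"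
    using zs B by (auto simp: fun_eq_iff)
  ultimately show ?thesis using r(1) B zs unfolding step_def by auto
qed

lemma reaches_upd:
  assumes z: "\<forall>r\<in>reactions C. fst r s = 0 \<and> snd r s = 0"
    and rc: "reaches C A B"
  shows "reaches C (A(s:=v)) (B(s:=v)) \<and> B s = A s"
  using rc unfolding reaches_def
proof (induction rule: rtranclp_induct)
  case base
  then show ?case by auto
next
  case (step y z')
  then show ?case using step_upd[OF z, of y z' v]
    by (metis (no_types, lifting) rtranclp.rtrancl_into_rtrancl)
qed

lemma reaches_mono:
  assumes "reactions C \<subseteq> reactions C'" "reaches C A B"
  shows "reaches C' A B"
proof -
  have "step C \<le> step C'" using assms(1) unfolding step_def by blast
  then show ?thesis using assms(2) unfolding reaches_def
    by (metis rtranclp_mono predicate2D)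
qed

locale fixr =
  fixes C :: crn and d k j :: nat
  assumes wf: "well_formed C d" and kd: "k < d"
begin

definition Lp :: nat where "Lp = Suc (Max (species C))"
definition Xp :: nat where "Xp = Suc Lp"
definition X :: nat where "X = inputs C ! k"
definition L :: nat where "L = leader_sp C"

definition newr :: reaction where
  "newr = ((\<lambda>s. if s = Lp then 1 else 0),
           (\<lambda>s. (if s = L then 1 else 0) + (if s = X then j else 0)))"

definition C' :: crn where
  "C' = C\<lparr>species := species C \<union> {Lp, Xp}, reactions := insert newr (reactions C),
          inputs := (inputs C)[k := Xp], leader_sp := Lp\<rparr>"

lemma fin: "finite (species C)" using wf unfolding well_formed_def by auto

lemma Lp_notin: "Lp \<notin> species C"
proof
  assume "Lp \<in> species C"
  then have "Lp \<le> Max (species C)" using Max_ge[OF fin] by blast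
  then show False unfolding Lp_def by simp
qed

lemma Xp_notin: "Xp \<notin> species C"
proof
  assume "Xp \<in> species C"
  then have "Xp \<le> Max (species C)" using Max_ge[OF fin] by blast
  then show False unfolding Xp_def Lp_def by simp
qed

lemma Lp_Xp: "Lp \<noteq> Xp" unfolding Xp_def by simp

lemma zero_out: "\<forall>r\<in>reactions C. \<forall>s. s \<notin> species C \<longrightarrow> fst r s = 0 \<and> snd r s = 0"
  using wf unfolding well_formed_def by auto

lemma zLp: "\<forall>r\<in>reactions C. fst r Lp = 0 \<and> snd r Lp = 0"
  using zero_out Lp_notin by auto
lemma zXp: "\<forall>r\<in>reactions C. fst r Xp = 0 \<and> snd r Xp = 0"
  using zero_out Xp_notin by auto

lemma inp_sp: "set (inputs C) \<subseteq> species C" using wf unfolding well_formed_def by auto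
lemma len: "length (inputs C) = d" using wf unfolding well_formed_def by auto
lemma dist: "distinct (inputs C)" using wf unfolding well_formed_def by auto

lemma X_sp: "X \<in> species C" using inp_sp len kd unfolding X_def by auto
lemma L_sp: "L \<in> species C" using wf unfolding well_formed_def L_def by auto

lemma X_ne: "X \<noteq> Lp" "X \<noteq> Xp" using X_sp Lp_notin Xp_notin by auto
lemma L_ne: "L \<noteq> Lp" "L \<noteq> Xp" using L_sp Lp_notin Xp_notin by auto

lemma wf': "well_formed C' d"
proof -
  have "set ((inputs C)[k := Xp]) \<subseteq> insert Xp (set (inputs C))"
    by (metis set_update_subset_insert)
  moreover have "distinct ((inputs C)[k := Xp])"
    using dist Xp_notin inp_sp by (auto intro!: distinct_list_update)
  moreover have "\<forall>r\<in>reactions C'. \<forall>s. s \<notin> species C' \<longrightarrow> fst r s = 0 \<and> snd r s = 0"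
    using zero_out X_sp L_sp unfolding C'_def newr_def by auto
  ultimately show ?thesis using wf Lp_notin Xp_notin Lp_Xp inp_sp
    unfolding well_formed_def C'_def by (auto simp: L_def)
qed

lemma oo': "output_oblivious C \<Longrightarrow> output_oblivious C'"
  using wf Lp_notin unfolding output_oblivious_def C'_def newr_def well_formed_def by auto

definition aug :: "config \<Rightarrow> config" where
  "aug A = (\<lambda>s. if s = Xp \<or> s = Lp then 0
      else A s + (if s = L then 1 else 0) + (if s = X then j else 0))"

definition P :: "nat list \<Rightarrow> config \<Rightarrow> bool" where
  "P x A \<longleftrightarrow> A Xp = x ! k \<and>
     ((A Lp = 0 \<and> reaches C (init_config C (x[k:=j])) (A(Xp:=0))) \<or>
      (A Lp = 1 \<and> reaches C (init_config C (x[k:=j])) (aug A)))"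

lemma step_C': "step C' A B \<longleftrightarrow> step C A B \<or>
   (fst newr \<le> A \<and> B = (\<lambda>s. A s - fst newr s + snd newr s))"
  unfolding step_def C'_def by auto

lemma P_step:
  assumes "P x A" "step C' A B"
  shows "P x B"
proof -
  let ?I = "init_config C (x[k:=j])"
  from assms(2)[unfolded step_C'] show ?thesis
  proof
    assume st: "step C A B"
    then obtain r where r: "r \<in> reactions C" "fst r \<le> A"
      and B: "B = (\<lambda>t. A t - fst r t + snd r t)" unfolding step_def by blast
    have zs: "fst r Xp = 0" "snd r Xp = 0" "fst r Lp = 0" "snd r Lp = 0"
      using zXp zLp r(1) by auto
    have BX: "B Xp = A Xp" "B Lp = A Lp" using B zs by auto
    from assms(1)[unfolded P_def] have AX: "A Xp = x ! k" by auto
    from assms(1)[unfolded P_def] consider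
      (a) "A Lp = 0" "reaches C ?I (A(Xp:=0))" | (b) "A Lp = 1" "reaches C ?I (aug A)" by auto
    then show ?thesis
    proof cases
      case a
      have "step C (A(Xp:=0)) (B(Xp:=0))" using step_upd[OF zXp st] by auto
      then have "reaches C ?I (B(Xp:=0))" using a(2) unfolding reaches_def by auto
      then show ?thesis unfolding P_def using BX AX a by auto
    next
      case b
      have "fst r \<le> aug A" unfolding le_fun_def
      proof
        fix t
        have "fst r t \<le> A t" using r(2) by (auto simp: le_fun_def)
        then show "fst r t \<le> aug A t" using zs unfolding aug_def by auto
      qed
      moreover have "aug B = (\<lambda>t. aug A t - fst r t + snd r t)"
      proof
        fix t
        have "fst r t \<le> A t" using r(2) by (auto simp: le_fun_def)
        then show "aug B t = aug A t - fst r t + snd r t"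
          using zs B unfolding aug_def by auto
      qed
      ultimately have "step C (aug A) (aug B)" using r(1) unfolding step_def by auto
      then have "reaches C ?I (aug B)" using b(2) unfolding reaches_def by auto
      then show ?thesis unfolding P_def using BX AX b by auto
    qed
  next
    assume n: "fst newr \<le> A \<and> B = (\<lambda>s. A s - fst newr s + snd newr s)"
    then have "A Lp \<ge> 1" unfolding newr_def by (auto simp: le_fun_def dest: spec[of _ Lp])
    with assms(1) have b: "A Lp = 1" "reaches C ?I (aug A)" "A Xp = x ! k"
      unfolding P_def by auto
    have B: "B = (\<lambda>s. A s - (if s = Lp then 1 else 0) + ((if s = L then 1 else 0) + (if s = X then j else 0)))"
      using n unfolding newr_def by simp
    have "B(Xp:=0) = aug A" using B X_ne L_ne b(1) unfolding aug_def by (auto simp: fun_eq_iff)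
    moreover have "B Lp = 0" "B Xp = x ! k" using B X_ne L_ne b Lp_Xp by auto
    ultimately show ?thesis using b unfolding P_def by auto
  qed
qed

lemma P_reaches:
  assumes "reaches C' A B" "P x A"
  shows "P x B"
  using assms(1,2) unfolding reaches_def
  by (induction rule: rtranclp_induct) (auto intro: P_step)

lemma sum_split:
  assumes "length x = d" "s \<noteq> Xp"
  shows "(\<Sum>t<d. if inputs C ! t = s then x[k:=j] ! t else 0) =
         (\<Sum>t<d. if (inputs C)[k:=Xp] ! t = s then x ! t else 0) + (if X = s then j else 0)"
proof -
  have fin: "finite {..<d}" and kin: "k \<in> {..<d}" using kd by auto
  have e1: "(\<Sum>t<d. if inputs C ! t = s then x[k:=j] ! t else 0) =
    (if X = s then j else 0) + (\<Sum>t\<in>{..<d}-{k}. if inputs C ! t = s then x[k:=j] ! t else 0)"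
    by (subst sum.remove[OF fin kin]) (use assms kd in \<open>simp add: X_def\<close>)
  have e2: "(\<Sum>t<d. if (inputs C)[k:=Xp] ! t = s then x ! t else 0) =
    0 + (\<Sum>t\<in>{..<d}-{k}. if (inputs C)[k:=Xp] ! t = s then x ! t else 0)"
    by (subst sum.remove[OF fin kin]) (use assms kd len in \<open>simp\<close>)
  have e3: "(\<Sum>t\<in>{..<d}-{k}. if inputs C ! t = s then x[k:=j] ! t else 0) =
     (\<Sum>t\<in>{..<d}-{k}. if (inputs C)[k:=Xp] ! t = s then x ! t else 0)"
    by (rule sum.cong) auto
  show ?thesis using e1 e2 e3 by simp
qed

lemma P_init:
  assumes "length x = d"
  shows "P x (init_config C' x)"
proof -
  let ?I' = "init_config C' x"
  have ic: "?I' = (\<lambda>s. (\<Sum>t<d. if (inputs C)[k:=Xp] ! t = s then x ! t else 0)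
      + (if s = Lp then 1 else 0))"
    using assms unfolding init_config_def C'_def by simp
  have notin: "\<And>t. t < d \<Longrightarrow> inputs C ! t \<in> species C" using inp_sp len by auto
  have "(\<Sum>t<d. if (inputs C)[k:=Xp] ! t = Lp then x ! t else 0) = 0"
  proof (rule sum.neutral, intro ballI)
    fix t assume "t \<in> {..<d}"
    then have "(inputs C)[k:=Xp] ! t \<noteq> Lp"
      using notin[of t] Lp_notin Lp_Xp len kd by (cases "t = k") auto
    then show "(if (inputs C)[k:=Xp] ! t = Lp then x ! t else 0) = 0" by simp
  qed
  then have I1: "?I' Lp = 1" using ic by simp
  have "(\<Sum>t<d. if (inputs C)[k:=Xp] ! t = Xp then x ! t else 0) =
        (\<Sum>t<d. if t = k then x ! t else 0)"
  proof (rule sum.cong)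
    fix t assume "t \<in> {..<d}"
    then have "(inputs C)[k:=Xp] ! t = Xp \<longleftrightarrow> t = k"
      using notin[of t] Xp_notin len kd by (cases "t = k") auto
    then show "(if (inputs C)[k:=Xp] ! t = Xp then x ! t else 0) = (if t = k then x ! t else 0)" by simp
  qed simp
  also have "\<dots> = x ! k" using kd by simp
  finally have I2: "?I' Xp = x ! k" using ic Lp_Xp by simp
  have "aug ?I' = init_config C (x[k:=j])"
  proof
    fix s
    show "aug ?I' s = init_config C (x[k:=j]) s"
    proof (cases "s = Xp \<or> s = Lp")
      case True
      then have "s \<notin> species C" using Lp_notin Xp_notin by auto
      then have "(\<Sum>t<d. if inputs C ! t = s then x[k:=j] ! t else 0) = 0"
        using notin by (intro sum.neutral) auto
      moreover have "s \<noteq> L" using True L_ne by auto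
      ultimately show ?thesis using True assms unfolding aug_def init_config_def by (simp add: L_def)
    next
      case False
      have a1: "aug ?I' s = ?I' s + (if s = L then 1 else 0) + (if s = X then j else 0)"
        using False unfolding aug_def by simp
      have a2: "?I' s = (\<Sum>t<d. if (inputs C)[k:=Xp] ! t = s then x ! t else 0)"
        using False by (simp add: ic)
      have a3: "init_config C (x[k:=j]) s = (\<Sum>t<d. if inputs C ! t = s then x[k:=j] ! t else 0)
          + (if s = L then 1 else 0)"
        using assms unfolding init_config_def L_def by simp
      show ?thesis using a1 a2 a3 sum_split[OF assms, of s] False by auto
    qed
  qed
  then show ?thesis unfolding P_def reaches_def using I1 I2 by auto
qed

lemma C'_old: "reaches C' A B \<Longrightarrow> A Lp = 0 \<Longrightarrow> reaches C A B \<and> B Lp = 0"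
  unfolding reaches_def
proof (induction rule: rtranclp_induct)
  case base then show ?case by auto
next
  case (step y z)
  then have "reaches C A y" "y Lp = 0" unfolding reaches_def by auto
  have "\<not> fst newr \<le> y" using \<open>y Lp = 0\<close> unfolding newr_def by (auto simp: le_fun_def dest: spec[of _ Lp])
  then have "step C y z" using step(2) step_C' by auto
  then show ?case using step_upd[OF zLp, of y z 0] step \<open>y Lp = 0\<close>
    by (metis (no_types, lifting) rtranclp.rtrancl_into_rtrancl)
qed

lemma main:
  assumes sc: "stably_computes C d f"
  shows "stably_computes C' d (fix_input f (Suc k) j)"
  unfolding stably_computes_def
proof (intro conjI allI impI wf')
  fix x A' assume lx: "length x = d" and ra: "reaches C' (init_config C' x) A'"
  have PA: "P x A'" using P_reaches[OF ra P_init[OF lx]] .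
  obtain A'' where A'': "reaches C' A' A''" "P x A''" "A'' Lp = 0"
  proof (cases "A' Lp = 0")
    case True then show ?thesis using that PA unfolding reaches_def by auto
  next
    case False
    then have "A' Lp = 1" using PA unfolding P_def by auto
    define B where "B = (\<lambda>s. A' s - fst newr s + snd newr s)"
    have "fst newr \<le> A'" using \<open>A' Lp = 1\<close> unfolding newr_def by (auto simp: le_fun_def)
    then have st: "step C' A' B" using step_C' B_def by auto
    have "B Lp = 0" using \<open>A' Lp = 1\<close> L_ne X_ne unfolding B_def newr_def by auto
    then show ?thesis using that[of B] st P_step[OF PA st] unfolding reaches_def by auto
  qed
  let ?x' = "x[k:=j]"
  have r0: "reaches C (init_config C ?x') (A''(Xp:=0))" "A'' Xp = x ! k"
    using A'' unfolding P_def by auto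
  obtain Z where Z: "reaches C (A''(Xp:=0)) Z" "stable C Z" "Z (out_species C) = f ?x'"
  proof -
    have "length ?x' = d" using lx by simp
    then show ?thesis using that sc r0(1) unfolding stably_computes_def by blast
  qed
  have ZX: "Z Xp = 0" "Z Lp = 0"
    using reaches_upd[OF zXp Z(1), of 0] reaches_upd[OF zLp Z(1), of 0] A''(3) Lp_Xp by auto
  define Z' where "Z' = Z(Xp := x ! k)"
  have "reaches C ((A''(Xp:=0))(Xp := x!k)) Z'"
    using reaches_upd[OF zXp Z(1)] unfolding Z'_def by auto
  moreover have "(A''(Xp:=0))(Xp := x!k) = A''" using r0(2) by auto
  ultimately have "reaches C A'' Z'" by simp
  then have "reaches C' A'' Z'" by (rule reaches_mono[rotated]) (auto simp: C'_def)
  then have rz: "reaches C' A' Z'" using A''(1) unfolding reaches_def by auto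
  have Y: "out_species C' = out_species C" "out_species C \<noteq> Xp"
    using wf Xp_notin unfolding C'_def well_formed_def by auto
  have "stable C' Z'"
    unfolding stable_def
  proof (intro allI impI)
    fix B assume "reaches C' Z' B"
    moreover have "Z' Lp = 0" using ZX Lp_Xp unfolding Z'_def by auto
    ultimately have "reaches C Z' B" using C'_old by auto
    then have "reaches C (Z'(Xp:=0)) (B(Xp:=0))" using reaches_upd[OF zXp] by auto
    moreover have "Z'(Xp:=0) = Z" using ZX unfolding Z'_def by auto
    ultimately have "(B(Xp:=0)) (out_species C) = Z (out_species C)"
      using Z(2) unfolding stable_def by auto
    then show "B (out_species C') = Z' (out_species C')" using Y unfolding Z'_def by auto
  qed
  moreover have "Z' (out_species C') = fix_input f (Suc k) j x"
    using Z(3) Y unfolding Z'_def fix_input_def by auto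
  ultimately show "\<exists>Z. reaches C' A' Z \<and> stable C' Z \<and> Z (out_species C') = fix_input f (Suc k) j x"
    using rz by blast
qed

end

theorem mainTheorem12:
  fixes f :: "nat list \<Rightarrow> nat" and d i j :: nat
  assumes "obliviously_computable d f"
    and "i \<in> {1..d}"
  shows "obliviously_computable d (fix_input f i j)"
proof -
  obtain C where C: "stably_computes C d f" "output_oblivious C"
    using assms(1) unfolding obliviously_computable_def by auto
  interpret fixr C d "i - 1" j
    using C(1) assms(2) by unfold_locales (auto simp: stably_computes_def)
  have "Suc (i - 1) = i" using assms(2) by auto
  then show ?thesis using main[OF C(1)] oo'[OF C(2)]
    unfolding obliviously_computable_def by metis
qed

end
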